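(* Let $G$ consist of two parallel paths $P_1,P_2$ from $s$ to $d$ with $\mathrm{len}(P_1)<\mathrm{len}(P_2)$ (so $P_1$ is the unique shortest path), and let $l_v=0$ for all vertices $v$. Let $g\in\mathcal F$ be non-linear, i.e. $g(x)\ne x$ for some $x\in[0,1/2]$. Then there exist a factor $\lambda>1$ (depending on $g$ and the path lengths), an initial input $f_0>0$, and an initial configuration (positive pheromone levels on all edges and nonnegative initial flows) such that, with inputs $f_s(t)=b_d(t)=\lambda^t f_0$ for all $t\ge0$, the dynamics governed by $g$ satisfies that $\nu^f_{ss_1}(t)$ does not converge to $1$ as $t\to\infty$.
   Context: Model. Directed graph $G=(V,E)$ with source $s$, destination $d$; discrete time $t=0,1,\dots$; pheromone levels $p_{uv}(t)\ge0$ on edges, forward flows $f_v(t)\ge0$ and backward flows $b_v(t)\ge0$ at vertices; leakage parameters $l_v\in[0,1]$ and decay parameter $\delta\in(0,1)$. $f_s(t)$ and $b_d(t)$ are exogenous inputs. Flow update: for $v\ne s$, $f_v(t+1)=(1-l_v)\sum_{z:(z,v)\in E}f_{zv}(t)$; for $u\ne d$, $b_u(t+1)=(1-l_u)\sum_{z:(u,z)\in E}b_{uz}(t)$; pheromone update $p_{uv}(t+1)=\delta(p_{uv}(t)+f_{uv}(t)+b_{uv}(t))$. Normalized pheromone levels $\nu^f_{uv}(t)=p_{uv}(t)/\sum_{z:(u,z)\in E}p_{uz}(t)$, $\nu^b_{uv}(t)=p_{uv}(t)/\sum_{z:(z,v)\in E}p_{zv}(t)$. $\mathrm{len}(P)$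 is the number of edges of $P$. Two parallel paths: $G$ is the union of two directed paths $P_1,P_2$ from $s$ to $d$ sharing only $s$ and $d$; $s_1,s_2$ are the successors of $s$ and $d_1,d_2$ the predecessors of $d$ on $P_1,P_2$. Family $\mathcal F$: continuous, monotonically non-decreasing functions $g:[0,1/2]\to[0,1]$ with $g(0)=0$ and $g(1/2)=1/2$. The dynamics governed by $g$: at every vertex of out-degree (resp. in-degree) one, the entire forward (resp. backward) flow goes along the unique edge; at $s$, with $x=\min(\nu^f_{ss_1}(t),\nu^f_{ss_2}(t))$, the edge attaining the minimum receives forward flow $g(x)f_s(t)$ and the other edge receives $(1-g(x))f_s(t)$ (if $x=1/2$ each receives $f_s(t)/2$); at $d$ the backward flow $b_d(t)$ is split between $(d_1,d)$ and $(d_2,d)$ in the same way using $\nu^b_{d_1d}(t),\nu^b_{d_2d}(t)$. The linear decision rule corresponds to $g(x)=x$. *)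

theory Defs
  imports "HOL-Analysis.Analysis"
begin

text \<open>Vertices: the source, the destination, and internal vertices
  Mid k j = the j-th vertex (1 \<le> j < len P_k) of path P_k, k \<in> {1,2}.\<close>
datatype vtx = Src | Dst | Mid nat nat

definition plen :: "nat \<Rightarrow> nat \<Rightarrow> nat \<Rightarrow> nat" where
  "plen L1 L2 k = (if k = 1 then L1 else L2)"

definition pv :: "nat \<Rightarrow> nat \<Rightarrow> nat \<Rightarrow> nat \<Rightarrow> vtx" where
  "pv L1 L2 k j = (if j = 0 then Src else if j = plen L1 L2 k then Dst else Mid k j)"

definition edges :: "nat \<Rightarrow> nat \<Rightarrow> (vtx \<times> vtx) set" where
  "edges L1 L2 = {(pv L1 L2 k j, pv L1 L2 k (Suc j)) | k j. k \<in> {1,2} \<and> j < plen L1 L2 k}"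

definition nuf :: "(vtx \<times> vtx) set \<Rightarrow> (vtx \<times> vtx \<Rightarrow> real) \<Rightarrow> vtx \<Rightarrow> vtx \<Rightarrow> real" where
  "nuf E p u v = p (u,v) / (\<Sum>z\<in>{z. (u,z) \<in> E}. p (u,z))"

definition nub :: "(vtx \<times> vtx) set \<Rightarrow> (vtx \<times> vtx \<Rightarrow> real) \<Rightarrow> vtx \<Rightarrow> vtx \<Rightarrow> real" where
  "nub E p u v = p (u,v) / (\<Sum>z\<in>{z. (z,v) \<in> E}. p (z,v))"

definition famF :: "(real \<Rightarrow> real) \<Rightarrow> bool" where
  "famF g \<longleftrightarrow> continuous_on {0..1/2} g \<and> mono_on {0..1/2} g \<and>
     (\<forall>x\<in>{0..1/2}. 0 \<le> g x \<and> g x \<le> 1) \<and> g 0 = 0 \<and> g (1/2) = 1/2"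

text \<open>Share of the flow received by an edge with normalized level a when the
  other edge has normalized level b (a + b = 1): the edge attaining the minimum x
  gets g x, the other gets 1 - g x; on a tie each gets 1/2.\<close>
definition share :: "(real \<Rightarrow> real) \<Rightarrow> real \<Rightarrow> real \<Rightarrow> real" where
  "share g a b = (if a = b then 1/2 else if a < b then g a else 1 - g b)"

definition fedge :: "(real \<Rightarrow> real) \<Rightarrow> nat \<Rightarrow> nat \<Rightarrow> (vtx \<times> vtx \<Rightarrow> real) \<Rightarrow> (vtx \<Rightarrow> real)
    \<Rightarrow> vtx \<times> vtx \<Rightarrow> real" where
  "fedge g L1 L2 p fv e =
     (let E = edges L1 L2; s1 = pv L1 L2 1 1; s2 = pv L1 L2 2 1 in
      if fst e = Src then
        (if snd e = s1 then share g (nuf E p Src s1) (nuf E p Src s2)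
         else share g (nuf E p Src s2) (nuf E p Src s1)) * fv Src
      else fv (fst e))"

definition bedge :: "(real \<Rightarrow> real) \<Rightarrow> nat \<Rightarrow> nat \<Rightarrow> (vtx \<times> vtx \<Rightarrow> real) \<Rightarrow> (vtx \<Rightarrow> real)
    \<Rightarrow> vtx \<times> vtx \<Rightarrow> real" where
  "bedge g L1 L2 p bv e =
     (let E = edges L1 L2; d1 = pv L1 L2 1 (L1 - 1); d2 = pv L1 L2 2 (L2 - 1) in
      if snd e = Dst then
        (if fst e = d1 then share g (nub E p d1 Dst) (nub E p d2 Dst)
         else share g (nub E p d2 Dst) (nub E p d1 Dst)) * bv Dst
      else bv (snd e))"

text \<open>Trajectory: state (p(t), f(t), b(t)). Parameters: g, path lengths,
  leakage l, decay delta, exogenous inputs fin = f_s, bin = b_d, initial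
  pheromones p0 and initial vertex flows f0, b0.\<close>
fun traj :: "(real \<Rightarrow> real) \<Rightarrow> nat \<Rightarrow> nat \<Rightarrow> (vtx \<Rightarrow> real) \<Rightarrow> real \<Rightarrow> (nat \<Rightarrow> real) \<Rightarrow> (nat \<Rightarrow> real)
    \<Rightarrow> (vtx \<times> vtx \<Rightarrow> real) \<Rightarrow> (vtx \<Rightarrow> real) \<Rightarrow> (vtx \<Rightarrow> real) \<Rightarrow> nat
    \<Rightarrow> (vtx \<times> vtx \<Rightarrow> real) \<times> (vtx \<Rightarrow> real) \<times> (vtx \<Rightarrow> real)" where
  "traj g L1 L2 l \<delta> fin bin p0 f0 b0 0 = (p0, f0(Src := fin 0), b0(Dst := bin 0))"
| "traj g L1 L2 l \<delta> fin bin p0 f0 b0 (Suc t) =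
     (let (p, fv, bv) = traj g L1 L2 l \<delta> fin bin p0 f0 b0 t; E = edges L1 L2 in
       (\<lambda>e. \<delta> * (p e + fedge g L1 L2 p fv e + bedge g L1 L2 p bv e),
        \<lambda>v. if v = Src then fin (Suc t)
            else (1 - l v) * (\<Sum>z\<in>{z. (z,v) \<in> E}. fedge g L1 L2 p fv (z,v)),
        \<lambda>u. if u = Dst then bin (Suc t)
            else (1 - l u) * (\<Sum>z\<in>{z. (u,z) \<in> E}. bedge g L1 L2 p bv (u,z))))"

end

theory Submission
  imports Defs
begin


lemma plen1[simp]: "plen L1 L2 1 = L1" and plen1'[simp]: "plen L1 L2 (Suc 0) = L1" and plen2[simp]: "plen L1 L2 2 = L2"
  by (auto simp: plen_def)

lemma pv_eq_Mid: "pv L1 L2 k j = Mid k' j' \<longleftrightarrow> k' = k \<and> j' = j \<and> j \<noteq> 0 \<and> j \<noteq> plen L1 L2 k"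
  by (auto simp: pv_def)

lemma pv_eq_Src: "pv L1 L2 k j = Src \<longleftrightarrow> j = 0"
  by (auto simp: pv_def)

lemma pv_eq_Dst: "pv L1 L2 k j = Dst \<longleftrightarrow> j \<noteq> 0 \<and> j = plen L1 L2 k"
  by (auto simp: pv_def)

lemma pv0[simp]: "pv L1 L2 k 0 = Src" by (simp add: pv_def)

lemma mem_edges: "(u,v) \<in> edges L1 L2 \<longleftrightarrow>
   (\<exists>k j. k \<in> {1,2} \<and> j < plen L1 L2 k \<and> u = pv L1 L2 k j \<and> v = pv L1 L2 k (Suc j))"
  by (auto simp: edges_def)

context fixes L1 L2 :: nat assumes L: "1 \<le> L1" "L1 < L2"
begin

lemma plen_pos: "k \<in> {1,2} \<Longrightarrow> 1 \<le> plen L1 L2 k"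
  using L by (auto simp: plen_def)

lemma succ_Src: "{z. (Src,z) \<in> edges L1 L2} = {pv L1 L2 1 1, pv L1 L2 2 1}"
proof -
  have "(Src,z) \<in> edges L1 L2 \<longleftrightarrow> z = pv L1 L2 1 1 \<or> z = pv L1 L2 2 1" for z
  proof
    assume "(Src,z) \<in> edges L1 L2"
    then obtain k j where "k \<in> {1,2}" "j < plen L1 L2 k" "Src = pv L1 L2 k j" "z = pv L1 L2 k (Suc j)"
      unfolding mem_edges by blast
    then show "z = pv L1 L2 1 1 \<or> z = pv L1 L2 2 1" using pv_eq_Src[of L1 L2 k j] by auto
  next
    assume "z = pv L1 L2 1 1 \<or> z = pv L1 L2 2 1"
    then show "(Src,z) \<in> edges L1 L2" unfolding mem_edges using L
      apply (elim disjE)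
       apply (rule exI[of _ 1], rule exI[of _ 0], simp)
      apply (rule exI[of _ 2], rule exI[of _ 0], simp)
      done
  qed
  then show ?thesis by auto
qed

lemma pred_Dst: "{z. (z,Dst) \<in> edges L1 L2} = {pv L1 L2 1 (L1-1), pv L1 L2 2 (L2-1)}"
proof -
  have "(z,Dst) \<in> edges L1 L2 \<longleftrightarrow> z = pv L1 L2 1 (L1-1) \<or> z = pv L1 L2 2 (L2-1)" for z
  proof
    assume "(z,Dst) \<in> edges L1 L2"
    then obtain k j where "k \<in> {1,2}" "j < plen L1 L2 k" "z = pv L1 L2 k j" "Dst = pv L1 L2 k (Suc j)"
      unfolding mem_edges by blast
    then have "Suc j = plen L1 L2 k" using pv_eq_Dst[of L1 L2 k "Suc j"] by auto
    then show "z = pv L1 L2 1 (L1-1) \<or> z = pv L1 L2 2 (L2-1)"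
      using \<open>k \<in> {1,2}\<close> \<open>z = _\<close> by (auto simp: plen_def)
  next
    assume "z = pv L1 L2 1 (L1-1) \<or> z = pv L1 L2 2 (L2-1)"
    then show "(z,Dst) \<in> edges L1 L2" unfolding mem_edges using L
      apply (elim disjE)
       apply (rule exI[of _ 1], rule exI[of _ "L1-1"], simp add: pv_eq_Dst[symmetric, THEN iffD1] pv_def)
      apply (rule exI[of _ 2], rule exI[of _ "L2-1"], simp add: pv_def)
      done
  qed
  then show ?thesis by auto
qed

lemma pred_Mid: assumes "k \<in> {1,2}" "0 < j" "j < plen L1 L2 k"
  shows "{z. (z, Mid k j) \<in> edges L1 L2} = {pv L1 L2 k (j-1)}"
proof -
  have "(z, Mid k j) \<in> edges L1 L2 \<longleftrightarrow> z = pv L1 L2 k (j-1)" for z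
  proof
    assume "(z, Mid k j) \<in> edges L1 L2"
    then obtain k' j' where "k' \<in> {1,2}" "j' < plen L1 L2 k'" "z = pv L1 L2 k' j'" "Mid k j = pv L1 L2 k' (Suc j')"
      unfolding mem_edges by blast
    then show "z = pv L1 L2 k (j-1)" using pv_eq_Mid[of L1 L2 k' "Suc j'" k j] by auto
  next
    assume "z = pv L1 L2 k (j-1)"
    moreover have "Mid k j = pv L1 L2 k (Suc (j-1))" using assms by (simp add: pv_def)
    ultimately show "(z, Mid k j) \<in> edges L1 L2" unfolding mem_edges using assms
      by (intro exI[of _ k] exI[of _ "j-1"]) auto
  qed
  then show ?thesis by auto
qed

lemma succ_Mid: assumes "k \<in> {1,2}" "0 < j" "j < plen L1 L2 k"
  shows "{z. (Mid k j, z) \<in> edges L1 L2} = {pv L1 L2 k (Suc j)}"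
proof -
  have "(Mid k j, z) \<in> edges L1 L2 \<longleftrightarrow> z = pv L1 L2 k (Suc j)" for z
  proof
    assume "(Mid k j, z) \<in> edges L1 L2"
    then obtain k' j' where "k' \<in> {1,2}" "j' < plen L1 L2 k'" "Mid k j = pv L1 L2 k' j'" "z = pv L1 L2 k' (Suc j')"
      unfolding mem_edges by blast
    then show "z = pv L1 L2 k (Suc j)" using pv_eq_Mid[of L1 L2 k' "j'" k j] by auto
  next
    assume "z = pv L1 L2 k (Suc j)"
    moreover have "Mid k j = pv L1 L2 k j" using assms by (simp add: pv_def)
    ultimately show "(Mid k j, z) \<in> edges L1 L2" unfolding mem_edges using assms
      by (intro exI[of _ k] exI[of _ "j"]) auto
  qed
  then show ?thesis by auto
qed

lemma s_distinct: "pv L1 L2 1 1 \<noteq> pv L1 L2 2 1"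
  using L by (auto simp: pv_def)

lemma d_distinct: "pv L1 L2 1 (L1-1) \<noteq> pv L1 L2 2 (L2-1)"
  using L by (auto simp: pv_def)

end


locale ss =
  fixes g :: "real \<Rightarrow> real" and L1 L2 :: nat and \<delta> lam U r :: real
  assumes L: "1 \<le> L1" "L1 < L2" and dl: "0 < \<delta>" "\<delta> < 1" and lam: "1 < lam"
    and U: "0 < U" "U < 1"
    and sh: "share g r (1-r) = U" and shs: "share g (1-r) r = 1-U"
    and rfix: "r * (U*(1 + (1/lam)^(L1-1)) + (1-U)*(1 + (1/lam)^(L2-1))) = U*(1 + (1/lam)^(L1-1))"
begin

definition "mu = 1/lam"
definition "kap = \<delta>/(lam-\<delta>)"
definition "S k = (if k = (1::nat) then U else 1-U)"
definition "PP k j = kap * (S k * (mu^j + mu^(plen L1 L2 k - 1 - j)))"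
definition "E = edges L1 L2"

definition "good c p fv bv \<longleftrightarrow>
  (\<forall>k\<in>{1,2}. \<forall>j<plen L1 L2 k. p (pv L1 L2 k j, pv L1 L2 k (Suc j)) = c * PP k j) \<and>
  (\<forall>k\<in>{1,2}. \<forall>j. 0<j \<and> j<plen L1 L2 k \<longrightarrow> fv (Mid k j) = c * (S k * mu^j)) \<and>
  (\<forall>k\<in>{1,2}. \<forall>j. 0<j \<and> j<plen L1 L2 k \<longrightarrow> bv (Mid k j) = c * (S k * mu^(plen L1 L2 k - j))) \<and>
  fv Src = c \<and> bv Dst = c"

lemma mu_pos: "0 < mu" and mu_lam: "lam * mu = 1" using lam by (auto simp: mu_def)
lemma kap_pos: "0 < kap" using lam dl by (auto simp: kap_def)
lemma kap_eq: "\<delta> * (kap + 1) = lam * kap" using lam dl by (auto simp: kap_def field_simps)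
lemma S_pos: "0 < S k" using U by (auto simp: S_def)
lemma PP_pos: "0 < PP k j" using kap_pos S_pos mu_pos by (auto simp: PP_def intro!: mult_pos_pos add_pos_pos)

lemma PP_ends: "PP 1 (L1-1) = PP 1 0" "PP 2 (L2-1) = PP 2 0"
  using L by (auto simp: PP_def)

lemma rho: "PP 1 0 / (PP 1 0 + PP 2 0) = r"
proof -
  have A: "PP 1 0 = kap * (U*(1 + mu^(L1-1)))" "PP 2 0 = kap * ((1-U)*(1 + mu^(L2-1)))"
    by (auto simp: PP_def S_def add.commute)
  have pos: "0 < U*(1 + mu^(L1-1)) + (1-U)*(1 + mu^(L2-1))"
    using U mu_pos by (intro add_pos_pos mult_pos_pos) auto
  define a where "a = U*(1 + mu^(L1-1))"
  define b where "b = (1-U)*(1 + mu^(L2-1))"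
  have rf: "r * (a + b) = a" using rfix unfolding a_def b_def mu_def .
  have "kap * a / (kap * a + kap * b) = a / (a+b)"
    using kap_pos by (simp add: distrib_left[symmetric])
  also have "\<dots> = r" using rf pos unfolding a_def[symmetric] b_def[symmetric] by (simp add: field_simps)
  finally show ?thesis unfolding A a_def b_def .
qed

lemma rho2: "PP 2 0 / (PP 1 0 + PP 2 0) = 1 - r"
proof -
  have "PP 1 0 + PP 2 0 > 0" using PP_pos by (simp add: add_pos_pos)
  then have "PP 2 0 / (PP 1 0 + PP 2 0) = 1 - PP 1 0 / (PP 1 0 + PP 2 0)"
    by (simp add: field_simps)
  then show ?thesis using rho by simp
qed

lemma nuf_good: assumes "good c p fv bv" "0 < c"
  shows "nuf E p Src (pv L1 L2 1 1) = r" "nuf E p Src (pv L1 L2 2 1) = 1 - r"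
proof -
  have p1: "p (Src, pv L1 L2 1 1) = c * PP 1 0" and p2: "p (Src, pv L1 L2 2 1) = c * PP 2 0"
  proof -
    have g1: "\<forall>j<L1. p (pv L1 L2 1 j, pv L1 L2 1 (Suc j)) = c * PP 1 j"
      and g2: "\<forall>j<L2. p (pv L1 L2 2 j, pv L1 L2 2 (Suc j)) = c * PP 2 j"
      using assms(1) unfolding good_def by auto
    show "p (Src, pv L1 L2 1 1) = c * PP 1 0" using g1[rule_format, of 0] L by simp
    show "p (Src, pv L1 L2 2 1) = c * PP 2 0" using g2[rule_format, of 0] L by simp
  qed
  have sum: "(\<Sum>z\<in>{z. (Src,z) \<in> E}. p (Src,z)) = c * (PP 1 0 + PP 2 0)"
    unfolding E_def succ_Src[OF L] using s_distinct[OF L] p1 p2 by (simp add: distrib_left)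
  show "nuf E p Src (pv L1 L2 1 1) = r" "nuf E p Src (pv L1 L2 2 1) = 1 - r"
    unfolding nuf_def sum p1 p2 using assms(2) rho rho2 by auto
qed

lemma nub_good: assumes "good c p fv bv" "0 < c"
  shows "nub E p (pv L1 L2 1 (L1-1)) Dst = r" "nub E p (pv L1 L2 2 (L2-1)) Dst = 1 - r"
proof -
  have e1: "Dst = pv L1 L2 1 (Suc (L1-1))" "Dst = pv L1 L2 2 (Suc (L2-1))" using L by (auto simp: pv_def)
  have p1: "p (pv L1 L2 1 (L1-1), Dst) = c * PP 1 0" and p2: "p (pv L1 L2 2 (L2-1), Dst) = c * PP 2 0"
  proof -
    have g1: "\<forall>j<L1. p (pv L1 L2 1 j, pv L1 L2 1 (Suc j)) = c * PP 1 j"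
      and g2: "\<forall>j<L2. p (pv L1 L2 2 j, pv L1 L2 2 (Suc j)) = c * PP 2 j"
      using assms(1) unfolding good_def by auto
    show "p (pv L1 L2 1 (L1-1), Dst) = c * PP 1 0" using g1[rule_format, of "L1-1"] L PP_ends e1 by simp
    show "p (pv L1 L2 2 (L2-1), Dst) = c * PP 2 0" using g2[rule_format, of "L2-1"] L PP_ends e1 by simp
  qed
  have sum: "(\<Sum>z\<in>{z. (z,Dst) \<in> E}. p (z,Dst)) = c * (PP 1 0 + PP 2 0)"
    unfolding E_def pred_Dst[OF L] using d_distinct[OF L] p1 p2 by (simp add: distrib_left)
  show "nub E p (pv L1 L2 1 (L1-1)) Dst = r" "nub E p (pv L1 L2 2 (L2-1)) Dst = 1 - r"
    unfolding nub_def sum p1 p2 using assms(2) rho rho2 by auto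
qed

lemma fedge_good: assumes "good c p fv bv" "0 < c" "k \<in> {1,2}" "j < plen L1 L2 k"
  shows "fedge g L1 L2 p fv (pv L1 L2 k j, pv L1 L2 k (Suc j)) = c * (S k * mu^j)"
proof (cases "j = 0")
  case True
  have fS: "fv Src = c" using assms(1) unfolding good_def by auto
  show ?thesis
  proof (cases "k = 1")
    case True
    then show ?thesis using \<open>j = 0\<close> nuf_good[OF assms(1,2)] fS sh
      by (simp add: fedge_def E_def S_def Let_def)
  next
    case False
    then have k2: "k = 2" using assms(3) by auto
    then show ?thesis using \<open>j = 0\<close> nuf_good[OF assms(1,2)] fS shs s_distinct[OF L]
      by (simp add: fedge_def E_def S_def Let_def)
  qed
next
  case False
  then have m: "pv L1 L2 k j = Mid k j" using assms(4) by (simp add: pv_def)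
  have "fv (Mid k j) = c * (S k * mu^j)" using assms(1,3,4) False unfolding good_def by auto
  then show ?thesis using m by (simp add: fedge_def Let_def)
qed

lemma bedge_good: assumes "good c p fv bv" "0 < c" "k \<in> {1,2}" "j < plen L1 L2 k"
  shows "bedge g L1 L2 p bv (pv L1 L2 k j, pv L1 L2 k (Suc j)) = c * (S k * mu^(plen L1 L2 k - 1 - j))"
proof (cases "Suc j = plen L1 L2 k")
  case True
  have bD: "bv Dst = c" using assms(1) unfolding good_def by auto
  have sD: "pv L1 L2 k (Suc j) = Dst" using True by (simp add: pv_def)
  show ?thesis
  proof (cases "k = 1")
    case True
    then have "j = L1 - 1" using \<open>Suc j = _\<close> by simp
    then show ?thesis using True sD nub_good[OF assms(1,2)] bD sh \<open>Suc j = _\<close>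
      by (simp add: bedge_def E_def S_def Let_def)
  next
    case False
    then have k2: "k = 2" using assms(3) by auto
    then have "j = L2 - 1" using \<open>Suc j = _\<close> by simp
    then show ?thesis using k2 sD nub_good[OF assms(1,2)] bD shs d_distinct[OF L] \<open>Suc j = _\<close>
      by (simp add: bedge_def E_def S_def Let_def)
  qed
next
  case False
  then have m: "pv L1 L2 k (Suc j) = Mid k (Suc j)" using assms(4) by (simp add: pv_def)
  have "bv (Mid k (Suc j)) = c * (S k * mu^(plen L1 L2 k - Suc j))"
    using assms(1,3,4) False unfolding good_def by auto
  then show ?thesis using m by (simp add: bedge_def Let_def)
qed

definition "p0 e = (case e of (u,v) \<Rightarrow> (case u of Src \<Rightarrow> if v = pv L1 L2 1 1 then PP 1 0 else PP 2 0
     | Mid k j \<Rightarrow> PP k j | Dst \<Rightarrow> 1))"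
definition "fi v = (case v of Mid k j \<Rightarrow> S k * mu^j | _ \<Rightarrow> 0)"
definition "bi v = (case v of Mid k j \<Rightarrow> S k * mu^(plen L1 L2 k - j) | _ \<Rightarrow> 0)"
definition "T t = traj g L1 L2 (\<lambda>_. 0) \<delta> (\<lambda>t. lam^t*1) (\<lambda>t. lam^t*1) p0 fi bi t"

lemma p0_pos: "0 < p0 e" using PP_pos by (auto simp: p0_def split: prod.splits vtx.splits)
lemma fi_nn: "0 \<le> fi v" and bi_nn: "0 \<le> bi v"
  using S_pos mu_pos by (auto simp: fi_def bi_def less_imp_le split: vtx.splits)

lemma good0: "good 1 p0 (fi(Src := 1)) (bi(Dst := 1))"
  unfolding good_def
proof (intro conjI ballI allI impI)
  fix k j assume k: "k \<in> {1,2}" and j: "j < plen L1 L2 k"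
  show "p0 (pv L1 L2 k j, pv L1 L2 k (Suc j)) = 1 * PP k j"
  proof (cases "j = 0")
    case True then show ?thesis using k s_distinct[OF L] by (auto simp: p0_def)
  next
    case False then have "pv L1 L2 k j = Mid k j" using j by (simp add: pv_def)
    then show ?thesis by (simp add: p0_def)
  qed
qed (auto simp: fi_def bi_def)

lemma step: assumes "good c p fv bv" "0 < c"
  shows "good (lam * c) (\<lambda>e. \<delta> * (p e + fedge g L1 L2 p fv e + bedge g L1 L2 p bv e))
     (\<lambda>v. if v = Src then lam * c
            else (1 - 0) * (\<Sum>z\<in>{z. (z,v) \<in> edges L1 L2}. fedge g L1 L2 p fv (z,v)))
     (\<lambda>u. if u = Dst then lam * c
            else (1 - 0) * (\<Sum>z\<in>{z. (u,z) \<in> edges L1 L2}. bedge g L1 L2 p bv (u,z)))"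
  unfolding good_def
proof (intro conjI ballI allI impI)
  fix k j assume k: "k \<in> {1,2}" and j: "j < plen L1 L2 k"
  have pe: "p (pv L1 L2 k j, pv L1 L2 k (Suc j)) = c * PP k j" using assms(1) k j unfolding good_def by auto
  show "\<delta> * (p (pv L1 L2 k j, pv L1 L2 k (Suc j)) + fedge g L1 L2 p fv (pv L1 L2 k j, pv L1 L2 k (Suc j))
           + bedge g L1 L2 p bv (pv L1 L2 k j, pv L1 L2 k (Suc j))) = lam * c * PP k j"
    unfolding pe fedge_good[OF assms k j] bedge_good[OF assms k j]
  proof -
    define X where "X = S k * (mu^j + mu^(plen L1 L2 k - 1 - j))"
    have "\<delta> * (c * PP k j + c * (S k * mu ^ j) + c * (S k * mu ^ (plen L1 L2 k - 1 - j)))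
        = c * (\<delta> * (kap + 1)) * X" unfolding PP_def X_def by (simp add: algebra_simps)
    also have "\<dots> = lam * c * PP k j" unfolding kap_eq PP_def X_def by (simp add: algebra_simps)
    finally show "\<delta> * (c * PP k j + c * (S k * mu ^ j) + c * (S k * mu ^ (plen L1 L2 k - 1 - j))) = lam * c * PP k j" .
  qed
next
  fix k j assume k: "k \<in> {1,2}" and j: "0 < j \<and> j < plen L1 L2 k"
  have m: "Mid k j = pv L1 L2 k (Suc (j-1))" using j by (simp add: pv_def)
  have "(\<Sum>z\<in>{z. (z, Mid k j) \<in> edges L1 L2}. fedge g L1 L2 p fv (z, Mid k j))
      = fedge g L1 L2 p fv (pv L1 L2 k (j-1), pv L1 L2 k (Suc (j-1)))"
    unfolding pred_Mid[OF L k conjunct1[OF j] conjunct2[OF j]] m[symmetric] by simp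
  also have "\<dots> = c * (S k * mu^(j-1))" using fedge_good[OF assms k, of "j-1"] j by linarith
  also have "\<dots> = lam * c * (S k * mu^j)"
  proof -
    have "mu^j = mu * mu^(j-1)" using j by (metis Suc_diff_1 power_Suc)
    then show ?thesis using mu_lam by (simp add: algebra_simps)
  qed
  finally show "(if Mid k j = Src then lam * c
          else (1 - 0) * (\<Sum>z\<in>{z. (z, Mid k j) \<in> edges L1 L2}. fedge g L1 L2 p fv (z, Mid k j))) =
         lam * c * (S k * mu ^ j)" by simp
next
  fix k j assume k: "k \<in> {1,2}" and j: "0 < j \<and> j < plen L1 L2 k"
  have m: "Mid k j = pv L1 L2 k j" using j by (simp add: pv_def)
  have "(\<Sum>z\<in>{z. (Mid k j, z) \<in> edges L1 L2}. bedge g L1 L2 p bv (Mid k j, z))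
      = bedge g L1 L2 p bv (pv L1 L2 k j, pv L1 L2 k (Suc j))"
    unfolding succ_Mid[OF L k conjunct1[OF j] conjunct2[OF j]] m[symmetric] by simp
  also have "\<dots> = c * (S k * mu^(plen L1 L2 k - 1 - j))" using bedge_good[OF assms k] j by simp
  also have "\<dots> = lam * c * (S k * mu^(plen L1 L2 k - j))"
  proof -
    have "mu^(plen L1 L2 k - j) = mu * mu^(plen L1 L2 k - 1 - j)" using j
      by (metis Suc_diff_Suc diff_Suc_eq_diff_pred power_Suc)
    then show ?thesis using mu_lam by (simp add: algebra_simps)
  qed
  finally show "(if Mid k j = Dst then lam * c
          else (1 - 0) * (\<Sum>z\<in>{z. (Mid k j, z) \<in> edges L1 L2}. bedge g L1 L2 p bv (Mid k j, z))) =
         lam * c * (S k * mu ^ (plen L1 L2 k - j))" by simp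
qed auto

lemma good_T: "good (lam^t) (fst (T t)) (fst (snd (T t))) (snd (snd (T t)))"
proof (induction t)
  case 0
  have "T 0 = (p0, fi(Src := 1), bi(Dst := 1))" by (simp add: T_def)
  then show ?case using good0 by (simp only: fst_conv snd_conv power_0)
next
  case (Suc t)
  obtain p fv bv where e: "T t = (p, fv, bv)" by (metis prod_cases3)
  have gd: "good (lam^t) p fv bv" using Suc e by simp
  have pos: "0 < lam^t" using lam by simp
  have "T (Suc t) = (\<lambda>e. \<delta> * (p e + fedge g L1 L2 p fv e + bedge g L1 L2 p bv e),
     (\<lambda>v. if v = Src then lam * lam ^ t
            else (1 - 0) * (\<Sum>z\<in>{z. (z,v) \<in> edges L1 L2}. fedge g L1 L2 p fv (z,v))),
     (\<lambda>u. if u = Dst then lam * lam ^ t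
            else (1 - 0) * (\<Sum>z\<in>{z. (u,z) \<in> edges L1 L2}. bedge g L1 L2 p bv (u,z))))"
    using e unfolding T_def by (simp only: traj.simps Let_def split power_Suc mult_1_right)
  then show ?case using step[OF gd pos] by (simp only: fst_conv snd_conv power_Suc)
qed

lemma nuf_T: "nuf (edges L1 L2) (fst (T t)) Src (pv L1 L2 1 1) = r"
  using nuf_good(1)[OF good_T] lam unfolding E_def by simp

lemma main_loc: "\<exists>f0::real. \<exists>q0 fj bj. f0 > 0 \<and>
         (\<forall>e\<in>edges L1 L2. q0 e > 0) \<and> (\<forall>v. fj v \<ge> 0 \<and> bj v \<ge> 0) \<and>
         \<not> ((\<lambda>t. nuf (edges L1 L2)
                 (fst (traj g L1 L2 (\<lambda>_. 0) \<delta> (\<lambda>t. lam ^ t * f0) (\<lambda>t. lam ^ t * f0) q0 fj bj t))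
                 Src (pv L1 L2 1 1)) \<longlonglongrightarrow> 1)"
proof -
  have r1: "r \<noteq> 1"
  proof
    assume "r = 1"
    then have "U*(1 + (1/lam)^(L1-1)) + (1-U)*(1 + (1/lam)^(L2-1)) = U*(1 + (1/lam)^(L1-1))" using rfix by simp
    then have "(1-U)*(1 + (1/lam)^(L2-1)) = 0" by (metis add_cancel_right_right)
    moreover have "0 < (1/lam)^(L2-1)" using lam by simp
    ultimately show False using U by simp
  qed
  have A: "\<forall>e\<in>edges L1 L2. 0 < p0 e" using p0_pos by auto
  have B: "\<forall>v. 0 \<le> fi v \<and> 0 \<le> bi v" using fi_nn bi_nn by auto
  have eq: "(\<lambda>t. nuf (edges L1 L2)
             (fst (traj g L1 L2 (\<lambda>_. 0) \<delta> (\<lambda>t. lam ^ t * 1) (\<lambda>t. lam ^ t * 1) p0 fi bi t))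
             Src (pv L1 L2 1 1)) = (\<lambda>t. r)"
    using nuf_T unfolding T_def by simp
  have C: "\<not> ((\<lambda>t. nuf (edges L1 L2)
             (fst (traj g L1 L2 (\<lambda>_. 0) \<delta> (\<lambda>t. lam ^ t * 1) (\<lambda>t. lam ^ t * 1) p0 fi bi t))
             Src (pv L1 L2 1 1)) \<longlonglongrightarrow> 1)"
    unfolding eq
  proof
    assume "(\<lambda>t. r) \<longlonglongrightarrow> 1"
    then have "r = 1" using LIMSEQ_unique tendsto_const by blast
    then show False using r1 by simp
  qed
  show ?thesis
    apply (rule exI[of _ 1], rule exI[of _ p0], rule exI[of _ fi], rule exI[of _ bi])
    using A B C by simp
qed

end


lemma share_swap: "share g (1-r) r = 1 - share g r (1-r)"
  by (auto simp: share_def)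

lemma share_half: "share g (1/2) (1 - 1/2) = 1/2" by (simp add: share_def)

lemma share_range: assumes "famF g" "0 \<le> r" "r \<le> 1"
  shows "0 \<le> share g r (1-r)" "share g r (1-r) \<le> 1"
  using assms unfolding famF_def share_def
  by (auto dest!: bspec[of _ _ r] bspec[of _ _ "1-r"])

lemma share_lo: "r < 1/2 \<Longrightarrow> share g r (1-r) = g r" by (auto simp: share_def)
lemma share_hi: "1/2 < r \<Longrightarrow> share g r (1-r) = 1 - g (1-r)" by (auto simp: share_def)

lemma good_point: assumes F: "famF g" and nl: "\<exists>x\<in>{0..1/2}. g x \<noteq> x"
  shows "\<exists>y. 0 < y \<and> y < 1 \<and> y \<noteq> 1/2 \<and> share g y (1-y) < y \<and>
     continuous_on {min y (1/2) .. max y (1/2)} (\<lambda>r. share g r (1-r))"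
proof -
  obtain x where x: "0 \<le> x" "x \<le> 1/2" "g x \<noteq> x" using nl by auto
  have g0: "g 0 = 0" and gh: "g (1/2) = 1/2" and gc: "continuous_on {0..1/2} g"
    and gb: "\<And>y. y \<in> {0..1/2} \<Longrightarrow> 0 \<le> g y \<and> g y \<le> 1"
    and gm: "mono_on {0..1/2} g" using F unfolding famF_def by auto
  have x0: "0 < x" using x g0 by (cases "x = 0") auto
  have xh: "x < 1/2" using x gh by (cases "x = 1/2") auto
  have "g x \<le> g (1/2)" using gm x unfolding mono_on_def by auto
  then have gxh: "g x \<le> 1/2" using gh by simp
  show ?thesis
  proof (cases "g x < x")
    case True
    have c: "continuous_on {x..1/2} (\<lambda>r. share g r (1-r))"
    proof (rule continuous_on_cong[THEN iffD1, OF refl _ continuous_on_subset[OF gc]])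
      fix r assume "r \<in> {x..1/2}"
      then show "g r = share g r (1-r)"
      proof (cases "r = 1/2")
        case True then show ?thesis by (subst True, simp add: share_def gh)
      qed (auto simp: share_def)
    qed (use x0 in auto)
    show ?thesis
      by (rule exI[of _ x]) (use x0 xh True c share_lo[OF xh] in auto)
  next
    case False
    then have gx: "g x > x" using x by auto
    have c: "continuous_on {1/2..1-x} (\<lambda>r. share g r (1-r))"
    proof (rule continuous_on_cong[THEN iffD1, OF refl _ ])
      fix r assume "r \<in> {1/2..1-x}"
      then show "1 - g (1 - r) = share g r (1-r)"
      proof (cases "r = 1/2")
        case True then show ?thesis by (subst True, simp add: share_def gh)
      qed (auto simp: share_def)
    next
      have "continuous_on {1/2..1-x} (\<lambda>r. g (1 - r))"
        by (rule continuous_on_compose2[OF gc]) (use x0 in \<open>auto intro!: continuous_intros\<close>)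
      then show "continuous_on {1/2..1-x} (\<lambda>r. 1 - g (1 - r))" by (intro continuous_intros)
    qed
    have "1/2 < 1 - x" using xh by simp
    then show ?thesis
      by (intro exI[of _ "1-x"]) (use x0 xh gx c share_hi[of "1-x" g] in auto)
  qed
qed

definition Gf :: "(real \<Rightarrow> real) \<Rightarrow> nat \<Rightarrow> nat \<Rightarrow> real \<Rightarrow> real \<Rightarrow> real" where
  "Gf g L1 L2 lam r = r * (share g r (1-r) * (1 + (1/lam)^(L1-1)) + (1 - share g r (1-r)) * (1 + (1/lam)^(L2-1)))
      - share g r (1-r) * (1 + (1/lam)^(L1-1))"

lemma a_strict: fixes lam :: real assumes "1 < lam" "L1 < L2" "1 \<le> L1" shows "(1/lam)^(L2-1) < (1/lam)^(L1-1)"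
proof -
  have "0 < 1/lam" "1/lam < 1" using assms by auto
  moreover have "L1 - 1 < L2 - 1" using assms by simp
  ultimately show ?thesis by (rule power_strict_decreasing[rotated])
qed

lemma Gf_half: assumes "1 < lam" "L1 < L2" "1 \<le> L1" shows "Gf g L1 L2 lam (1/2) < 0"
  using a_strict[OF assms] by (simp add: Gf_def share_def field_simps)

lemma Gf_zero: assumes "1 < lam" "L1 < L2" "1 \<le> L1" and y: "0 < y" "y < 1" "y \<noteq> 1/2"
  and c: "continuous_on {min y (1/2) .. max y (1/2)} (\<lambda>r. share g r (1-r))"
  and G: "0 \<le> Gf g L1 L2 lam y"
  shows "\<exists>r. 0 < r \<and> r < 1 \<and> Gf g L1 L2 lam r = 0"
proof -
  have cG: "continuous_on {min y (1/2) .. max y (1/2)} (Gf g L1 L2 lam)"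
    unfolding Gf_def by (intro continuous_intros c)
  have h: "Gf g L1 L2 lam (1/2) < 0" by (rule Gf_half[OF assms(1,2,3)])
  show ?thesis
  proof (cases "y < 1/2")
    case True
    then have cG': "continuous_on {y..1/2} (Gf g L1 L2 lam)" using cG by (simp add: min_def max_def)
    obtain r where "y \<le> r" "r \<le> 1/2" "Gf g L1 L2 lam r = 0"
      using IVT2'[of "Gf g L1 L2 lam" "1/2" 0 y, OF _ G _ cG'] h True by auto
    then show ?thesis using y by (intro exI[of _ r]) auto
  next
    case False
    then have yh: "1/2 < y" using y by auto
    then have cG': "continuous_on {1/2..y} (Gf g L1 L2 lam)" using cG by (simp add: min_def max_def)
    obtain r where "1/2 \<le> r" "r \<le> y" "Gf g L1 L2 lam r = 0"
      using IVT'[of "Gf g L1 L2 lam" "1/2" 0 y, OF _ G _ cG'] h yh by auto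
    then show ?thesis using y by (intro exI[of _ r]) auto
  qed
qed



lemma exists_lam_zero: assumes L: "1 \<le> L1" "L1 < L2" and F: "famF g"
  and nl: "\<exists>x\<in>{0..1/2}. g x \<noteq> x"
  shows "\<exists>lam r. 1 < lam \<and> 0 < r \<and> r < 1 \<and> Gf g L1 L2 lam r = 0"
proof -
  obtain y where y: "0 < y" "y < 1" "y \<noteq> 1/2" and hy: "share g y (1-y) < y"
    and c: "continuous_on {min y (1/2) .. max y (1/2)} (\<lambda>r. share g r (1-r))"
    using good_point[OF F nl] by blast
  define h where "h = share g y (1-y)"
  have h01: "0 \<le> h" "h \<le> 1" using share_range[OF F, of y] y unfolding h_def by auto
  have hy': "h < y" using hy unfolding h_def .
  have Gy: "Gf g L1 L2 lam y = (y - h) - h * (1/lam)^(L1-1) * (1-y) + y * (1-h) * (1/lam)^(L2-1)" for lam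
    unfolding Gf_def h_def[symmetric] by (simp add: algebra_simps)
  show ?thesis
  proof (cases "2 \<le> L1")
    case True
    define d where "d = y - h"
    have d: "0 < d" "d < 1" using hy' h01 y unfolding d_def by auto
    define lam where "lam = 2/d"
    have lam1: "1 < lam" using d unfolding lam_def by (simp add: field_simps)
    have "(1/lam)^(L1-1) \<le> (1/lam)^1"
      using lam1 True by (intro power_decreasing) auto
    then have a1: "(1/lam)^(L1-1) \<le> d/2" unfolding lam_def by simp
    have a1p: "0 \<le> (1/lam)^(L1-1)" and a2p: "0 \<le> (1/lam)^(L2-1)" using lam1 by auto
    have "h * (1/lam)^(L1-1) * (1-y) \<le> 1 * (1/lam)^(L1-1) * 1"
      using h01 y a1p by (intro mult_mono mult_nonneg_nonneg) auto
    moreover have "0 \<le> y * (1-h) * (1/lam)^(L2-1)" using y h01 a2p by simp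
    ultimately have "0 \<le> Gf g L1 L2 lam y" unfolding Gy using a1 d_def d by linarith
    then obtain r where "0 < r \<and> r < 1 \<and> Gf g L1 L2 lam r = 0"
      using Gf_zero[OF lam1 L(2) L(1) y c] by blast
    then show ?thesis using lam1 by blast
  next
    case False
    then have L11: "L1 = 1" using L by simp
    have Gy1: "Gf g L1 L2 lam y = (y - (2-y)*h) + y * (1-h) * (1/lam)^(L2-1)" for lam
      using Gy[of lam] L11 by (simp add: algebra_simps)
    show ?thesis
    proof (cases "0 \<le> y - (2-y)*h")
      case True
      have lam1: "(1::real) < 2" by simp
      have "0 \<le> y * (1-h) * (1/2)^(L2-1)" using y h01 by simp
      then have "0 \<le> Gf g L1 L2 2 y" unfolding Gy1 using True by linarith
      then obtain r where "0 < r \<and> r < 1 \<and> Gf g L1 L2 2 r = 0"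
        using Gf_zero[OF lam1 L(2) L(1) y c] by blast
      then show ?thesis using lam1 by blast
    next
      case False
      define a where "a = ((2-y)*h - y) / (y * (1-h))"
      have yh: "0 < y * (1-h)" using y hy' h01 by simp
      have a0: "0 < a" unfolding a_def using False yh by simp
      have a1: "a < 1" unfolding a_def using yh hy' by (simp add: field_simps)
      have n: "0 < L2 - 1" using L by simp
      define lam where "lam = 1 / root (L2-1) a"
      have rt: "0 < root (L2-1) a" "root (L2-1) a < 1" using real_root_gt_zero[OF n a0] n a1 by auto
      have lam1: "1 < lam" unfolding lam_def using rt by simp
      have ha: "(1/lam)^(L2-1) = a" unfolding lam_def using real_root_pow_pos[OF n a0] by simp
      have "y*(1-h)*a = (2-y)*h - y" unfolding a_def using yh by (metis less_irrefl nonzero_mult_div_cancel_left times_divide_eq_right)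
      then have "Gf g L1 L2 lam y = 0" using Gy1[of lam] ha by simp
      then show ?thesis using lam1 y by blast
    qed
  qed
qed

lemma exist_params: assumes L: "1 \<le> L1" "L1 < L2" and F: "famF g"
  and nl: "\<exists>x\<in>{0..1/2}. g x \<noteq> x"
  shows "\<exists>lam U r. 1 < lam \<and> 0 < U \<and> U < 1 \<and> share g r (1-r) = U \<and> share g (1-r) r = 1-U \<and> r < 1 \<and>
     r * (U*(1 + (1/lam)^(L1-1)) + (1-U)*(1 + (1/lam)^(L2-1))) = U*(1 + (1/lam)^(L1-1))"
proof -
  obtain lam r where lam1: "1 < lam" and r: "0 < r" "r < 1" and G: "Gf g L1 L2 lam r = 0"
    using exists_lam_zero[OF assms] by blast
  define U where "U = share g r (1-r)"
  define a1 where "a1 = (1/lam)^(L1-1)"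
  define a2 where "a2 = (1/lam)^(L2-1)"
  have a: "0 \<le> a1" "0 \<le> a2" using lam1 unfolding a1_def a2_def by auto
  have U01: "0 \<le> U" "U \<le> 1" using share_range[OF F, of r] r unfolding U_def by auto
  have eq: "r * (U*(1 + a1) + (1-U)*(1 + a2)) = U*(1 + a1)"
    using G unfolding Gf_def U_def[symmetric] a1_def[symmetric] a2_def[symmetric] by simp
  have "U \<noteq> 0"
  proof
    assume "U = 0"
    then have "r * (1 + a2) = 0" using eq by simp
    then show False using r a by simp
  qed
  moreover have "U \<noteq> 1"
  proof
    assume "U = 1"
    then have "r * (1 + a1) = 1 + a1" using eq by simp
    then show False using r a by simp
  qed
  ultimately have "0 < U" "U < 1" using U01 by auto
  then show ?thesis using lam1 r eq share_swap[of g r] unfolding U_def a1_def a2_def by blast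
qed


theorem proposition3:
  fixes L1 L2 :: nat and g :: "real \<Rightarrow> real"
  assumes "1 \<le> L1" and "L1 < L2"
    and "famF g"
    and "\<exists>x\<in>{0..1/2}. g x \<noteq> x"
  shows "\<exists>lam::real. lam > 1 \<and>
    (\<forall>\<delta>::real. 0 < \<delta> \<and> \<delta> < 1 \<longrightarrow>
      (\<exists>f0::real. \<exists>p0 fi bi. f0 > 0 \<and>
         (\<forall>e\<in>edges L1 L2. p0 e > 0) \<and> (\<forall>v. fi v \<ge> 0 \<and> bi v \<ge> 0) \<and>
         \<not> ((\<lambda>t. nuf (edges L1 L2)
                 (fst (traj g L1 L2 (\<lambda>_. 0) \<delta> (\<lambda>t. lam ^ t * f0) (\<lambda>t. lam ^ t * f0) p0 fi bi t))
                 Src (pv L1 L2 1 1)) \<longlonglongrightarrow> 1)))"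
proof -
  obtain lam U r where lam1: "1 < lam" and U: "0 < U" "U < 1" and sh: "share g r (1-r) = U"
    and shs: "share g (1-r) r = 1-U" and r1: "r < 1"
    and rfix: "r * (U*(1 + (1/lam)^(L1-1)) + (1-U)*(1 + (1/lam)^(L2-1))) = U*(1 + (1/lam)^(L1-1))"
    using exist_params[OF assms] by blast
  have X: "\<forall>\<delta>::real. 0 < \<delta> \<and> \<delta> < 1 \<longrightarrow>
      (\<exists>f0::real. \<exists>p0 fi bi. f0 > 0 \<and>
         (\<forall>e\<in>edges L1 L2. p0 e > 0) \<and> (\<forall>v. fi v \<ge> 0 \<and> bi v \<ge> 0) \<and>
         \<not> ((\<lambda>t. nuf (edges L1 L2)
                 (fst (traj g L1 L2 (\<lambda>_. 0) \<delta> (\<lambda>t. lam ^ t * f0) (\<lambda>t. lam ^ t * f0) p0 fi bi t))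
                 Src (pv L1 L2 1 1)) \<longlonglongrightarrow> 1))"
  proof (intro allI impI)
    fix \<delta> :: real assume d: "0 < \<delta> \<and> \<delta> < 1"
    have "ss g L1 L2 \<delta> lam U r"
      using assms(1,2) d lam1 U sh shs rfix by unfold_locales auto
    from ss.main_loc[OF this]
    show "\<exists>f0::real. \<exists>p0 fi bi. f0 > 0 \<and>
         (\<forall>e\<in>edges L1 L2. p0 e > 0) \<and> (\<forall>v. fi v \<ge> 0 \<and> bi v \<ge> 0) \<and>
         \<not> ((\<lambda>t. nuf (edges L1 L2)
                 (fst (traj g L1 L2 (\<lambda>_. 0) \<delta> (\<lambda>t. lam ^ t * f0) (\<lambda>t. lam ^ t * f0) p0 fi bi t))
                 Src (pv L1 L2 1 1)) \<longlonglongrightarrow> 1)" by blast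
  qed
  show ?thesis using lam1 X by blast
qed

end
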